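(* Let $k\ge9$ and let $\boldsymbol\xi\in[P_{k-1}(\boldsymbol K)]^3$ be such that all the vertex functionals, the edge moments $(\boldsymbol\xi\cdot\boldsymbol t,1)_{\boldsymbol e}$, and the edge functionals (1.a)–(1.f) of the space $\mathbf N^{\operatorname{curl}}_{k-1}$ (listed in the context) vanish on $\boldsymbol\xi$. Then $\boldsymbol\xi$, $\nabla\boldsymbol\xi$ and $\nabla(\operatorname{curl}\boldsymbol\xi)$ vanish on every edge of $\boldsymbol K$.
   Context: $\boldsymbol K$ is a tetrahedron, $P_m$ denotes polynomials of degree $\le m$. For an edge $\boldsymbol e$ with endpoints having barycentric coordinates $\lambda_0,\lambda_1$ (restricted to $\boldsymbol e$), let $\boldsymbol t$ be its unit tangent and $\boldsymbol n_1,\boldsymbol n_2$ orthonormal unit normals with $\boldsymbol n_1\perp\boldsymbol n_2$. For a space $W$ of functions on $\boldsymbol e$, $W/\mathbb R$ denotes its subspace of zero-mean functions. $\langle\!\langle u,v\rangle\!\rangle_{0,\boldsymbol e}=(\partial u/\partial\boldsymbol t,\partial v/\partial\boldsymbol t)_{\boldsymbol e}$. Functionals of $\mathbf N^{\operatorname{curl}}_{k-1}$ on $\boldsymbol\xi\in[P_{k-1}(\boldsymbol K)]^3$: vertex functionals: all partial derivatives $D^\alpha\boldsymbol\xi(\boldsymbol x)$, $0\le|\alpha|\le3$, at each vertex $\boldsymbol x$; edge moments $(\boldsymbol\xi\cdot\boldsymbol t,1)_{\boldsymbol e}$ for each edge; on each edge $\boldsymbol e$: (1.a) $(\boldsymbol\xi\cdot\boldsymbol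 t,b)_{\boldsymbol e}$, $b\in(\lambda_0\lambda_1)^4P_{k-9}(\boldsymbol e)/\mathbb R$; (1.b) $\langle\!\langle\boldsymbol\xi\cdot\boldsymbol n_j,b\rangle\!\rangle_{0,\boldsymbol e}$, $b\in(\lambda_0\lambda_1)^4P_{k-9}(\boldsymbol e)$, $j=1,2$; (1.c) $(\partial(\boldsymbol\xi\cdot\boldsymbol t)/\partial\boldsymbol n_j,b)_{\boldsymbol e}$, $b\in(\lambda_0\lambda_1)^3P_{k-8}(\boldsymbol e)$, $j=1,2$; (1.d) $(\partial(\boldsymbol\xi\cdot\boldsymbol n_{j'})/\partial\boldsymbol n_j,b)_{\boldsymbol e}$, $b\in(\lambda_0\lambda_1)^3P_{k-8}(\boldsymbol e)$, $j,j'=1,2$; (1.e) $(\partial(\operatorname{curl}\boldsymbol\xi)/\partial\boldsymbol n_1,\boldsymbol b)_{\boldsymbol e}$, $\boldsymbol b\in[(\lambda_0\lambda_1)^2P_{k-7}(\boldsymbol e)]^3$; (1.f) $((I-\boldsymbol n_2\otimes\boldsymbol n_2)\,\partial(\operatorname{curl}\boldsymbol\xi)/\partial\boldsymbol n_2,\boldsymbol b)_{\boldsymbol e}$, $\boldsymbol b\in[(\lambda_0\lambda_1)^2P_{k-7}(\boldsymbol e)]^3$. *)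

theory Defs
  imports "HOL-Analysis.Analysis" "HOL-Computational_Algebra.Polynomial"
begin

definition poly3 :: "nat \<Rightarrow> (real^3 \<Rightarrow> real) \<Rightarrow> bool" where
  "poly3 m f \<longleftrightarrow> (\<exists>c :: nat \<Rightarrow> nat \<Rightarrow> nat \<Rightarrow> real. \<forall>x.
     f x = (\<Sum>a\<le>m. \<Sum>b\<le>m - a. \<Sum>d\<le>m - a - b.
              c a b d * (x$1)^a * (x$2)^b * (x$3)^d))"

definition vpoly3 :: "nat \<Rightarrow> (real^3 \<Rightarrow> real^3) \<Rightarrow> bool" where
  "vpoly3 m f \<longleftrightarrow> (\<forall>i. poly3 m (\<lambda>x. f x $ i))"

definition dd :: "(real^3 \<Rightarrow> 'b::real_normed_vector) \<Rightarrow> real^3 \<Rightarrow> real^3 \<Rightarrow> 'b" where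
  "dd f v x = frechet_derivative f (at x) v"

definition pd :: "3 \<Rightarrow> (real^3 \<Rightarrow> 'b::real_normed_vector) \<Rightarrow> real^3 \<Rightarrow> 'b" where
  "pd i f = dd f (axis i 1)"

definition curl :: "(real^3 \<Rightarrow> real^3) \<Rightarrow> real^3 \<Rightarrow> real^3" where
  "curl f x = vector
     [pd 2 (\<lambda>y. f y $ 3) x - pd 3 (\<lambda>y. f y $ 2) x,
      pd 3 (\<lambda>y. f y $ 1) x - pd 1 (\<lambda>y. f y $ 3) x,
      pd 1 (\<lambda>y. f y $ 2) x - pd 2 (\<lambda>y. f y $ 1) x]"

text \<open>Edge from a to b parametrised by s \<in> [0,1]; barycentrics on the edge are
  lambda0 = 1 - s, lambda1 = s.  Functions on the edge are functions of s.\<close>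
definition edge_pt :: "real^3 \<Rightarrow> real^3 \<Rightarrow> real \<Rightarrow> real^3" where
  "edge_pt a b s = a + s *\<^sub>R (b - a)"

definition edge_ip :: "real^3 \<Rightarrow> real^3 \<Rightarrow> (real \<Rightarrow> real) \<Rightarrow> (real \<Rightarrow> real) \<Rightarrow> real" where
  "edge_ip a b u w = norm (b - a) * integral {0..1} (\<lambda>s. u s * w s)"

definition edge_ipv :: "real^3 \<Rightarrow> real^3 \<Rightarrow> (real \<Rightarrow> real^3) \<Rightarrow> (real \<Rightarrow> real^3) \<Rightarrow> real" where
  "edge_ipv a b u w = norm (b - a) * integral {0..1} (\<lambda>s. u s \<bullet> w s)"

definition bubble_space :: "nat \<Rightarrow> nat \<Rightarrow> (real \<Rightarrow> real) set" where
  "bubble_space m d = {(\<lambda>s. ((1 - s) * s) ^ m * poly q s) | q :: real poly. degree q \<le> d}"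

definition zero_mean :: "(real \<Rightarrow> real) set \<Rightarrow> (real \<Rightarrow> real) set" where
  "zero_mean W = {w \<in> W. integral {0..1} w = 0}"

definition tderiv :: "real^3 \<Rightarrow> real^3 \<Rightarrow> (real \<Rightarrow> real) \<Rightarrow> real \<Rightarrow> real" where
  "tderiv a b w s = deriv w s / norm (b - a)"

definition utangent :: "real^3 \<Rightarrow> real^3 \<Rightarrow> real^3" where
  "utangent a b = (1 / norm (b - a)) *\<^sub>R (b - a)"

definition edge_dofs_vanish ::
  "nat \<Rightarrow> real^3 \<Rightarrow> real^3 \<Rightarrow> real^3 \<Rightarrow> real^3 \<Rightarrow> (real^3 \<Rightarrow> real^3) \<Rightarrow> bool" where
  "edge_dofs_vanish k a b n1 n2 \<xi> \<longleftrightarrow>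
     (let t = utangent a b; p = edge_pt a b; n = (\<lambda>j::nat. if j = 1 then n1 else n2) in
       edge_ip a b (\<lambda>s. \<xi> (p s) \<bullet> t) (\<lambda>s. 1) = 0
     \<and> (\<forall>w \<in> zero_mean (bubble_space 4 (k - 9)).
          edge_ip a b (\<lambda>s. \<xi> (p s) \<bullet> t) w = 0)
     \<and> (\<forall>j \<in> {1,2}. \<forall>w \<in> bubble_space 4 (k - 9).
          edge_ip a b (\<lambda>s. dd (\<lambda>x. \<xi> x \<bullet> n j) t (p s)) (tderiv a b w) = 0)
     \<and> (\<forall>j \<in> {1,2}. \<forall>w \<in> bubble_space 3 (k - 8).
          edge_ip a b (\<lambda>s. dd (\<lambda>x. \<xi> x \<bullet> t) (n j) (p s)) w = 0)
     \<and> (\<forall>j \<in> {1,2}. \<forall>j' \<in> {1,2}. \<forall>w \<in> bubble_space 3 (k - 8).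
          edge_ip a b (\<lambda>s. dd (\<lambda>x. \<xi> x \<bullet> n j') (n j) (p s)) w = 0)
     \<and> (\<forall>w. (\<forall>i. (\<lambda>s. w s $ i) \<in> bubble_space 2 (k - 7)) \<longrightarrow>
          edge_ipv a b (\<lambda>s. dd (curl \<xi>) n1 (p s)) w = 0)
     \<and> (\<forall>w. (\<forall>i. (\<lambda>s. w s $ i) \<in> bubble_space 2 (k - 7)) \<longrightarrow>
          edge_ipv a b (\<lambda>s. let v = dd (curl \<xi>) n2 (p s) in v - (v \<bullet> n2) *\<^sub>R n2) w = 0))"

end

theory Submission
  imports Defs
begin


inductive pol :: "nat \<Rightarrow> (real^3 \<Rightarrow> real) \<Rightarrow> bool" where
  pconst: "pol m (\<lambda>x. c)"
| pcoord: "pol (Suc m) (\<lambda>x. x $ i)"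
| padd: "pol m f \<Longrightarrow> pol m g \<Longrightarrow> pol m (\<lambda>x. f x + g x)"
| pmult: "pol m f \<Longrightarrow> pol n g \<Longrightarrow> pol (m+n) (\<lambda>x. f x * g x)"
| pmono: "pol m f \<Longrightarrow> m \<le> n \<Longrightarrow> pol n f"

lemma pol_scale: "pol m f \<Longrightarrow> pol m (\<lambda>x. c * f x)"
  by (drule pmult[OF pconst[of 0 c]]) simp

lemma pol_neg: "pol m f \<Longrightarrow> pol m (\<lambda>x. - f x)"
  using pol_scale[of m f "-1"] by simp

lemma pol_sub: "pol m f \<Longrightarrow> pol m g \<Longrightarrow> pol m (\<lambda>x. f x - g x)"
  using padd[OF _ pol_neg, of m f g] by simp

lemma pol_sum: "finite S \<Longrightarrow> (\<And>i. i \<in> S \<Longrightarrow> pol m (f i)) \<Longrightarrow> pol m (\<lambda>x. \<Sum>i\<in>S. f i x)"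
proof (induction S rule: finite_induct)
  case empty then show ?case using pconst[of m 0] by simp
next
  case (insert a S) then show ?case using padd[of m "f a" "\<lambda>x. \<Sum>i\<in>S. f i x"] by simp
qed

lemma pol0_const: "pol m f \<Longrightarrow> m = 0 \<Longrightarrow> \<exists>c. f = (\<lambda>x. c)"
proof (induction rule: pol.induct)
  case (padd m f g) then show ?case by force
next
  case (pmult m f n g) then show ?case by force
qed auto

lemma pol_has_derivative: "pol m f \<Longrightarrow> \<exists>f'. \<forall>x. (f has_derivative f' x) (at x)"
proof (induction rule: pol.induct)
  case (pconst m c) then show ?case by (auto intro: derivative_eq_intros)
next
  case (pcoord m i)
  have "((\<lambda>x. x $ i) has_derivative (\<lambda>v. v $ i)) (at x)" for x :: "real^3"
    by (rule bounded_linear_imp_has_derivative) (rule bounded_linear_vec_nth)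
  then show ?case by (intro exI[of _ "\<lambda>x v. v $ i"]) auto
next
  case (padd m f g)
  then obtain f' g' where "\<forall>x. (f has_derivative f' x) (at x)" "\<forall>x. (g has_derivative g' x) (at x)" by blast
  then show ?case by (intro exI[of _ "\<lambda>x v. f' x v + g' x v"] allI has_derivative_add) auto
next
  case (pmult m f n g)
  then obtain f' g' where "\<forall>x. (f has_derivative f' x) (at x)" "\<forall>x. (g has_derivative g' x) (at x)" by blast
  then show ?case by (intro exI[of _ "\<lambda>x v. f x * g' x v + f' x v * g x"] allI has_derivative_mult) auto
qed auto

lemma pol_deriv: "pol m f \<Longrightarrow> (f has_derivative (\<lambda>v. dd f v x)) (at x)"
proof -
  assume "pol m f"
  then obtain f' where "\<forall>x. (f has_derivative f' x) (at x)" using pol_has_derivative by blast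
  then have "f differentiable (at x)" unfolding differentiable_def by blast
  then show ?thesis unfolding dd_def by (rule iffD1[OF frechet_derivative_works])
qed

lemma pol_linear: "pol m f \<Longrightarrow> linear (\<lambda>v. dd f v x)"
  using pol_deriv has_derivative_linear by blast

lemma dd_const: "dd (\<lambda>x. c) v = (\<lambda>x. 0)"
  unfolding dd_def by (simp add: frechet_derivative_const)

lemma dd_coord: "dd (\<lambda>x. x $ i) v = (\<lambda>x. v $ i)"
proof
  fix x :: "real^3"
  have "((\<lambda>x. x $ i) has_derivative (\<lambda>v. v $ i)) (at x)"
    by (rule bounded_linear_imp_has_derivative) (rule bounded_linear_vec_nth)
  then have "(\<lambda>v. v $ i) = frechet_derivative (\<lambda>x. x $ i) (at x)" by (rule frechet_derivative_at)
  then show "dd (\<lambda>x. x $ i) v x = v $ i" unfolding dd_def using fun_cong[of _ _ v] by simp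
qed

lemma dd_add: "pol m f \<Longrightarrow> pol n g \<Longrightarrow> dd (\<lambda>x. f x + g x) v = (\<lambda>x. dd f v x + dd g v x)"
proof
  fix x
  assume "pol m f" "pol n g"
  have E: "(\<lambda>h. dd f h x + dd g h x) = frechet_derivative (\<lambda>x. f x + g x) (at x)"
    by (rule frechet_derivative_at, rule has_derivative_add[OF pol_deriv[OF \<open>pol m f\<close>] pol_deriv[OF \<open>pol n g\<close>]])
  show "dd (\<lambda>x. f x + g x) v x = dd f v x + dd g v x"
    using fun_cong[OF E, of v] by (simp add: dd_def)
qed

lemma dd_mult: "pol m f \<Longrightarrow> pol n g \<Longrightarrow> dd (\<lambda>x. f x * g x) v = (\<lambda>x. f x * dd g v x + dd f v x * g x)"
proof
  fix x
  assume "pol m f" "pol n g"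
  have E: "(\<lambda>h. f x * dd g h x + dd f h x * g x) = frechet_derivative (\<lambda>x. f x * g x) (at x)"
    by (rule frechet_derivative_at, rule has_derivative_mult[OF pol_deriv[OF \<open>pol m f\<close>] pol_deriv[OF \<open>pol n g\<close>]])
  show "dd (\<lambda>x. f x * g x) v x = f x * dd g v x + dd f v x * g x"
    using fun_cong[OF E, of v] by (simp add: dd_def)
qed

lemma pol_dd: "pol m f \<Longrightarrow> pol (m - 1) (dd f v)"
proof (induction rule: pol.induct)
  case (pconst m c) then show ?case by (simp add: dd_const) (rule pconst)
next
  case (pcoord m i) then show ?case by (simp add: dd_coord) (rule pconst)
next
  case (padd m f g) then show ?case by (simp add: dd_add pol.padd)
next
  case (pmult m f n g)
  show ?case
  proof (cases "m = 0")
    case True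
    then obtain c where f: "f = (\<lambda>x. c)" using pol0_const[OF pmult(1)] by blast
    have "dd (\<lambda>x. f x * g x) v = (\<lambda>x. c * dd g v x)"
      unfolding dd_mult[OF pmult(1,2)] unfolding f dd_const by simp
    then show ?thesis using pol_scale[OF pmult(4), of c] True by simp
  next
    case m: False
    show ?thesis
    proof (cases "n = 0")
      case True
      then obtain c where g: "g = (\<lambda>x. c)" using pol0_const[OF pmult(2)] by blast
      have "dd (\<lambda>x. f x * g x) v = (\<lambda>x. c * dd f v x)"
        unfolding dd_mult[OF pmult(1,2)] unfolding g dd_const by (simp add: mult.commute)
      then show ?thesis using pol_scale[OF pmult(3), of c] True by simp
    next
      case False
      have a: "pol (m + (n - 1)) (\<lambda>x. f x * dd g v x)" by (rule pol.pmult[OF pmult(1,4)])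
      have b: "pol ((m - 1) + n) (\<lambda>x. dd f v x * g x)" by (rule pol.pmult[OF pmult(3,2)])
      have "m + (n - 1) = m + n - 1" "(m - 1) + n = m + n - 1" using m False by auto
      then have "pol (m + n - 1) (\<lambda>x. f x * dd g v x + dd f v x * g x)"
        using a b by (intro pol.padd) auto
      then show ?thesis by (simp add: dd_mult[OF pmult(1,2)])
    qed
  qed
next
  case (pmono m f n) show ?case by (rule pol.pmono[OF pmono.IH]) (use pmono in auto)
qed

lemma pol_pd: "pol m f \<Longrightarrow> pol (m - 1) (pd i f)"
  unfolding pd_def by (rule pol_dd)

lemma dd_expand: "pol m f \<Longrightarrow> dd f v x = (\<Sum>i\<in>UNIV. v $ i * pd i f x)"
proof -
  assume "pol m f"
  then have L: "linear (\<lambda>v. dd f v x)" by (rule pol_linear)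
  have "dd f v x = dd f (\<Sum>i\<in>UNIV. v $ i *\<^sub>R axis i 1) x"
    using basis_expansion[of v] by (simp add: scalar_mult_eq_scaleR)
  also have "\<dots> = (\<Sum>i\<in>UNIV. v $ i * pd i f x)"
    by (simp add: linear_sum[OF L] linear_cmul[OF L] pd_def)
  finally show ?thesis .
qed

lemma dd_scale: "pol m f \<Longrightarrow> dd f (c *\<^sub>R v) x = c * dd f v x"
  using linear_cmul[OF pol_linear] by simp

lemma dd_addv: "pol m f \<Longrightarrow> dd f (u + v) x = dd f u x + dd f v x"
  using linear_add[OF pol_linear] by simp

lemma dd_sum: "finite S \<Longrightarrow> (\<And>i. i \<in> S \<Longrightarrow> pol m (f i)) \<Longrightarrow>
   dd (\<lambda>x. \<Sum>i\<in>S. f i x) v = (\<lambda>x. \<Sum>i\<in>S. dd (f i) v x)"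
proof (induction S rule: finite_induct)
  case empty then show ?case by (simp add: dd_const)
next
  case (insert a S)
  have "pol m (\<lambda>x. \<Sum>i\<in>S. f i x)" using insert by (intro pol_sum) auto
  then show ?case using insert dd_add[of m "f a" m "\<lambda>x. \<Sum>i\<in>S. f i x"] by simp
qed

lemma dd_lin: "finite S \<Longrightarrow> (\<And>i. i \<in> S \<Longrightarrow> pol m (f i)) \<Longrightarrow>
   dd (\<lambda>x. \<Sum>i\<in>S. c i * f i x) v = (\<lambda>x. \<Sum>i\<in>S. c i * dd (f i) v x)"
proof -
  assume a: "finite S" "\<And>i. i \<in> S \<Longrightarrow> pol m (f i)"
  have "dd (\<lambda>x. c i * f i x) v = (\<lambda>x. c i * dd (f i) v x)" if "i \<in> S" for i
    using dd_mult[OF pconst a(2)[OF that], of "c i" v] by (simp add: dd_const)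
  then show ?thesis using dd_sum[OF a(1), of m "\<lambda>i x. c i * f i x"] a pol_scale by simp
qed



lemma pol_pow: "pol a (\<lambda>x. (x $ i) ^ a)"
proof (induction a)
  case 0 then show ?case using pconst[of 0 1] by simp
next
  case (Suc a)
  show ?case using pmult[OF pcoord[of 0 i] Suc] by simp
qed

lemma poly3_pol: "poly3 m f \<Longrightarrow> pol m f"
proof -
  assume "poly3 m f"
  then obtain c where c: "\<forall>x. f x = (\<Sum>a\<le>m. \<Sum>b\<le>m - a. \<Sum>d\<le>m - a - b.
              c a b d * (x$1)^a * (x$2)^b * (x$3)^d)" unfolding poly3_def by blast
  have t: "pol m (\<lambda>x. c a b d * (x$1)^a * (x$2)^b * (x$3)^d)" if "a \<le> m" "b \<le> m - a" "d \<le> m - a - b" for a b d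
  proof -
    have "pol (a + b + d) (\<lambda>x. c a b d * (x$1)^a * (x$2)^b * (x$3)^d)"
      by (intro pmult pol_scale pol_pow)
    then show ?thesis by (rule pmono) (use that in auto)
  qed
  have "pol m (\<lambda>x. \<Sum>a\<le>m. \<Sum>b\<le>m - a. \<Sum>d\<le>m - a - b.
              c a b d * (x$1)^a * (x$2)^b * (x$3)^d)"
    by (intro pol_sum t) auto
  moreover have "f = (\<lambda>x. \<Sum>a\<le>m. \<Sum>b\<le>m - a. \<Sum>d\<le>m - a - b.
              c a b d * (x$1)^a * (x$2)^b * (x$3)^d)" using c by auto
  ultimately show ?thesis by simp
qed

lemma pol_line: "pol m f \<Longrightarrow> \<exists>P. degree P \<le> m \<and> (\<forall>s. f (a + s *\<^sub>R v) = poly P s)"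
proof (induction rule: pol.induct)
  case (pconst m c) then show ?case by (intro exI[of _ "[:c:]"]) auto
next
  case (pcoord m i) then show ?case by (intro exI[of _ "[:a $ i, v $ i:]"]) auto
next
  case (padd m f g)
  then obtain P Q where "degree P \<le> m" "\<forall>s. f (a + s *\<^sub>R v) = poly P s"
     "degree Q \<le> m" "\<forall>s. g (a + s *\<^sub>R v) = poly Q s" by blast
  then show ?case by (intro exI[of _ "P + Q"]) (auto intro: order.trans[OF degree_add_le_max])
next
  case (pmult m f n g)
  then obtain P Q where "degree P \<le> m" "\<forall>s. f (a + s *\<^sub>R v) = poly P s"
     "degree Q \<le> n" "\<forall>s. g (a + s *\<^sub>R v) = poly Q s" by blast
  then show ?case by (intro exI[of _ "P * Q"]) (auto intro: order.trans[OF degree_mult_le])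
next
  case (pmono m f n) then show ?case by (meson order.trans)
qed

lemma restr_deriv:
  assumes g: "pol m g" and P: "\<forall>s. g (a + s *\<^sub>R D) = poly P s"
  shows "dd g D (a + s *\<^sub>R D) = poly (pderiv P) s"
proof -
  have l: "((\<lambda>s. a + s *\<^sub>R D) has_derivative (\<lambda>h. h *\<^sub>R D)) (at s)"
    by (auto intro!: derivative_eq_intros)
  have "((\<lambda>s. g (a + s *\<^sub>R D)) has_derivative (\<lambda>h. dd g (h *\<^sub>R D) (a + s *\<^sub>R D))) (at s)"
    by (rule has_derivative_compose[OF l pol_deriv[OF g]])
  moreover have "(\<lambda>h. dd g (h *\<^sub>R D) (a + s *\<^sub>R D)) = (*) (dd g D (a + s *\<^sub>R D))"
    using dd_scale[OF g] by (auto simp: mult.commute)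
  moreover have "(\<lambda>s. g (a + s *\<^sub>R D)) = poly P" using P by auto
  ultimately have "(poly P has_field_derivative dd g D (a + s *\<^sub>R D)) (at s)"
    unfolding has_field_derivative_def by simp
  then show ?thesis using poly_DERIV DERIV_unique by blast
qed

definition ddi :: "(real^3 \<Rightarrow> real) \<Rightarrow> real^3 \<Rightarrow> nat \<Rightarrow> (real^3 \<Rightarrow> real)" where
  "ddi g D j = ((\<lambda>f. dd f D) ^^ j) g"

lemma ddi_Suc: "ddi g D (Suc j) = dd (ddi g D j) D"
  by (simp add: ddi_def)

lemma pol_ddi: "pol m g \<Longrightarrow> pol (m - j) (ddi g D j)"
proof (induction j)
  case 0 then show ?case by (simp add: ddi_def)
next
  case (Suc j) then show ?case using pol_dd[of "m - j" "ddi g D j" D] by (simp add: ddi_Suc)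
qed

lemma restr_ddi:
  assumes g: "pol m g" and P: "\<forall>s. g (a + s *\<^sub>R D) = poly P s"
  shows "ddi g D j (a + s *\<^sub>R D) = poly ((pderiv ^^ j) P) s"
proof (induction j arbitrary: s)
  case 0 then show ?case using P by (simp add: ddi_def)
next
  case (Suc j)
  show ?case unfolding ddi_Suc using restr_deriv[OF pol_ddi[OF g] allI[OF Suc]] by simp
qed

fun pdl :: "3 list \<Rightarrow> (real^3 \<Rightarrow> real) \<Rightarrow> (real^3 \<Rightarrow> real)" where
  "pdl [] f = f"
| "pdl (p # ps) f = pdl ps (pd p f)"

definition Za :: "nat \<Rightarrow> (real^3 \<Rightarrow> real) \<Rightarrow> real^3 \<Rightarrow> bool" where
  "Za r g x \<longleftrightarrow> (\<forall>ps. length ps < r \<longrightarrow> pdl ps g x = 0)"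

lemma pdl_lin: "finite S \<Longrightarrow> (\<And>i. i \<in> S \<Longrightarrow> pol m (f i)) \<Longrightarrow>
   pdl ps (\<lambda>x. \<Sum>i\<in>S. c i * f i x) = (\<lambda>x. \<Sum>i\<in>S. c i * pdl ps (f i) x)"
proof (induction ps arbitrary: f m)
  case Nil then show ?case by simp
next
  case (Cons p ps)
  have "pd p (\<lambda>x. \<Sum>i\<in>S. c i * f i x) = (\<lambda>x. \<Sum>i\<in>S. c i * pd p (f i) x)"
    unfolding pd_def by (rule dd_lin[OF Cons.prems])
  moreover have "pdl ps (\<lambda>x. \<Sum>i\<in>S. c i * pd p (f i) x) = (\<lambda>x. \<Sum>i\<in>S. c i * pdl ps (pd p (f i)) x)"
    by (rule Cons.IH[OF Cons.prems(1) pol_pd[OF Cons.prems(2)]])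
  ultimately show ?case by simp
qed

lemma Za_lin: "finite S \<Longrightarrow> (\<And>i. i \<in> S \<Longrightarrow> pol m (f i)) \<Longrightarrow> (\<And>i. i \<in> S \<Longrightarrow> Za r (f i) x) \<Longrightarrow>
   Za r (\<lambda>x. \<Sum>i\<in>S. c i * f i x) x"
  unfolding Za_def using pdl_lin[of S m f _ c] by simp

lemma dd_fun: "pol m g \<Longrightarrow> dd g v = (\<lambda>y. \<Sum>i\<in>UNIV. v $ i * pd i g y)"
  using dd_expand by blast

lemma Za_dd: "pol m g \<Longrightarrow> Za (Suc r) g x \<Longrightarrow> Za r (dd g v) x"
proof -
  assume g: "pol m g" and Z: "Za (Suc r) g x"
  have "Za r (pd i g) x" for i using Z unfolding Za_def
    by (metis Suc_mono length_Cons pdl.simps(2))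
  then have "Za r (\<lambda>y. \<Sum>i\<in>UNIV. v $ i * pd i g y) x"
    by (intro Za_lin[of _ "m - 1"] pol_pd[OF g]) auto
  then show ?thesis using dd_fun[OF g] by simp
qed

lemma Za_pd: "Za (Suc r) g x \<Longrightarrow> Za r (pd p g) x"
  unfolding Za_def by (metis Suc_mono length_Cons pdl.simps(2))

lemma Za_zero: "Za (Suc r) g x \<Longrightarrow> g x = 0"
  unfolding Za_def by (metis length_0_conv pdl.simps(1) zero_less_Suc)

lemma Za_ddi: "pol m g \<Longrightarrow> Za r g x \<Longrightarrow> j \<le> r \<Longrightarrow> Za (r - j) (ddi g D j) x"
proof (induction j)
  case 0 then show ?case by (simp add: ddi_def)
next
  case (Suc j)
  then have "Za (Suc (r - Suc j)) (ddi g D j) x" by (simp add: Suc_diff_Suc)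
  then show ?case unfolding ddi_Suc by (rule Za_dd[OF pol_ddi[OF Suc.prems(1)]])
qed

lemma Za_ddi0: "pol m g \<Longrightarrow> Za r g x \<Longrightarrow> j < r \<Longrightarrow> ddi g D j x = 0"
  using Za_ddi[of m g r x j D] Za_zero by (metis Suc_diff_Suc less_imp_le)



lemma root_order: "(\<forall>j<r. poly ((pderiv ^^ j) P) c = 0) \<Longrightarrow> [:-c,1:]^r dvd (P::real poly)"
proof (induction r arbitrary: P)
  case 0 then show ?case by simp
next
  case (Suc r)
  have "\<forall>j<r. poly ((pderiv ^^ j) (pderiv P)) c = 0"
  proof (intro allI impI)
    fix j assume "j < r"
    then have "Suc j < Suc r" by simp
    then have "poly ((pderiv ^^ Suc j) P) c = 0" using Suc.prems by blast
    then show "poly ((pderiv ^^ j) (pderiv P)) c = 0" by (simp only: funpow_Suc_right o_apply)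
  qed
  then have d: "[:-c,1:]^r dvd pderiv P" by (rule Suc.IH)
  have P0: "poly P c = 0" using Suc.prems by (metis funpow_0 zero_less_Suc)
  show ?case
  proof (cases "P = 0")
    case True then show ?thesis by simp
  next
    case False
    have "pderiv P \<noteq> 0"
    proof
      assume "pderiv P = 0"
      then have "degree P = 0" by (simp add: pderiv_eq_0_iff)
      then obtain a where "P = [:a:]" by (metis degree_eq_zeroE)
      then show False using P0 False by simp
    qed
    then have "r \<le> order c (pderiv P)" using d order_divides by blast
    moreover have "order c P = Suc (order c (pderiv P))" by (rule order_pderiv[OF False P0])
    ultimately have "Suc r \<le> order c P" by simp
    then show ?thesis using order_divides by blast
  qed
qed

lemma factor01:
  fixes P :: "real poly"
  assumes h0: "\<forall>j<r. poly ((pderiv ^^ j) P) 0 = 0" and h1: "\<forall>j<r. poly ((pderiv ^^ j) P) 1 = 0"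
    and dg: "degree P \<le> m"
  shows "\<exists>Q. degree Q \<le> m - 2*r \<and> (\<forall>s. poly P s = ((1 - s) * s) ^ r * poly Q s)"
proof (cases "P = 0")
  case True then show ?thesis by (intro exI[of _ 0]) auto
next
  case False
  have "[:-0,1:]^r dvd P" using root_order[OF h0] .
  then obtain R where R: "P = [:0,1:]^r * R" by (auto elim: dvdE)
  have R0: "R \<noteq> 0" using False R by auto
  have PR: "[:0,1:]^r * R \<noteq> 0" using R0 by simp
  have "r \<le> order 1 P" using root_order[OF h1] False order_divides by blast
  moreover have "order 1 P = order 1 ([:0,1:]^r :: real poly) + order 1 R" unfolding R using order_mult[OF PR] by blast
  moreover have "order 1 ([:0,1:]^r :: real poly) = 0" using order_root[of "[:0,1:]^r :: real poly" 1] by simp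
  ultimately have "r \<le> order 1 R" by simp
  then have "[:-1,1:]^r dvd R" using order_divides by blast
  then obtain Q where Q: "R = [:-1,1:]^r * Q" by (auto elim: dvdE)
  have Q0: "Q \<noteq> 0" using Q R0 by auto
  have "degree P = r + (r + degree Q)" unfolding R Q
    using Q0 by (simp add: degree_mult_eq degree_linear_power)
  then have dQ: "degree (smult ((-1)^r) Q) \<le> m - 2*r" using dg by simp
  have "poly P s = ((1 - s) * s) ^ r * poly (smult ((-1)^r) Q) s" for s
  proof -
    have "poly P s = s^r * (s - 1)^r * poly Q s" unfolding R Q by (simp add: poly_power)
    also have "(s - 1)^r = (-1)^r * (1 - s)^r" by (metis minus_diff_eq power_minus)
    finally show ?thesis by (simp add: power_mult_distrib mult_ac)
  qed
  then show ?thesis using dQ by blast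
qed

lemma edge_bubble:
  assumes g: "pol m g" and za: "Za r g a" and zb: "Za r g b"
  shows "\<exists>Q. degree Q \<le> m - 2*r \<and> (\<forall>s. g (a + s *\<^sub>R (b - a)) = ((1 - s) * s) ^ r * poly Q s)"
proof -
  obtain P where P: "degree P \<le> m" "\<forall>s. g (a + s *\<^sub>R (b - a)) = poly P s"
    using pol_line[OF g] by blast
  have "\<forall>j<r. poly ((pderiv ^^ j) P) 0 = 0"
  proof (intro allI impI)
    fix j assume j: "j < r"
    show "poly ((pderiv ^^ j) P) 0 = 0"
      using restr_ddi[OF g P(2), of j 0] Za_ddi0[OF g za j, of "b - a"] by simp
  qed
  moreover have "\<forall>j<r. poly ((pderiv ^^ j) P) 1 = 0"
  proof (intro allI impI)
    fix j assume j: "j < r"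
    show "poly ((pderiv ^^ j) P) 1 = 0"
      using restr_ddi[OF g P(2), of j 1] Za_ddi0[OF g zb j, of "b - a"] by simp
  qed
  ultimately obtain Q where "degree Q \<le> m - 2*r" "\<forall>s. poly P s = ((1 - s) * s) ^ r * poly Q s"
    using factor01[OF _ _ P(1)] by blast
  then show ?thesis using P(2) by auto
qed

lemma int_sq_zero:
  fixes f :: "real \<Rightarrow> real"
  assumes c: "continuous_on {0..1} f" and i: "integral {0..1} (\<lambda>s. f s * f s) = (0::real)"
  shows "\<forall>s\<in>{0..1}. f s = 0"
proof -
  have "continuous_on {0..1} (\<lambda>s. f s * f s)" using c by (intro continuous_intros)
  then have "\<forall>s\<in>{0..1}. f s * f s = 0" using integral_eq_0_iff[of 0 1 "\<lambda>s. f s * f s"] i by simp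
  then show ?thesis by simp
qed

lemma poly_zero_on01: "\<forall>s\<in>{0..1::real}. poly P s = 0 \<Longrightarrow> P = 0"
proof (rule ccontr)
  assume a: "\<forall>s\<in>{0..1::real}. poly P s = 0" "P \<noteq> 0"
  have "finite {x. poly P x = 0}" by (rule poly_roots_finite[OF a(2)])
  moreover have "{0..1::real} \<subseteq> {x. poly P x = 0}" using a by auto
  ultimately have "finite {0..1::real}" by (rule finite_subset[rotated])
  then show False using infinite_Icc[of "0::real" 1] by simp
qed



definition vpol :: "nat \<Rightarrow> (real^3 \<Rightarrow> real^3) \<Rightarrow> bool" where
  "vpol m F \<longleftrightarrow> (\<forall>i. pol m (\<lambda>y. F y $ i))"

lemma vpoly3_vpol: "vpoly3 m F \<Longrightarrow> vpol m F"
  unfolding vpoly3_def vpol_def using poly3_pol by blast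

lemma vpol_has_derivative:
  assumes "vpol m F"
  shows "(F has_derivative (\<lambda>v. \<chi> i. dd (\<lambda>y. F y $ i) v x)) (at x)"
proof -
  have "((\<lambda>y. F y \<bullet> b) has_derivative (\<lambda>v. (\<chi> i. dd (\<lambda>y. F y $ i) v x) \<bullet> b)) (at x)"
    if "b \<in> Basis" for b
  proof -
    obtain j where b: "b = axis j 1" using \<open>b \<in> Basis\<close> unfolding Basis_vec_def by auto
    have "((\<lambda>y. F y $ j) has_derivative (\<lambda>v. dd (\<lambda>y. F y $ j) v x)) (at x)"
      using assms unfolding vpol_def by (intro pol_deriv) auto
    moreover have "(\<lambda>y. F y \<bullet> b) = (\<lambda>y. F y $ j)" unfolding b inner_axis by simp
    moreover have "(\<lambda>v. (\<chi> i. dd (\<lambda>y. F y $ i) v x) \<bullet> b) = (\<lambda>v. dd (\<lambda>y. F y $ j) v x)"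
      unfolding b inner_axis by simp
    ultimately show ?thesis by simp
  qed
  then show ?thesis using has_derivative_componentwise_within[of F _ x UNIV] by blast
qed

lemma dd_vec: "vpol m F \<Longrightarrow> dd F v x $ i = dd (\<lambda>y. F y $ i) v x"
proof -
  assume "vpol m F"
  then have "(\<lambda>v. \<chi> i. dd (\<lambda>y. F y $ i) v x) = frechet_derivative F (at x)"
    by (intro frechet_derivative_at vpol_has_derivative)
  then have "frechet_derivative F (at x) v = (\<chi> i. dd (\<lambda>y. F y $ i) v x)"
    by (simp add: fun_eq_iff)
  then have "frechet_derivative F (at x) v $ i = dd (\<lambda>y. F y $ i) v x" by simp
  then show ?thesis unfolding dd_def[of F] .
qed

lemma pd_vec: "vpol m F \<Longrightarrow> pd p F x $ i = pd p (\<lambda>y. F y $ i) x"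
  unfolding pd_def by (rule dd_vec)

lemma pd_vec_fun: "vpol m F \<Longrightarrow> (\<lambda>y. pd p F y $ i) = pd p (\<lambda>y. F y $ i)"
  using pd_vec by blast

lemma dd_vec_fun: "vpol m F \<Longrightarrow> (\<lambda>y. dd F v y $ i) = dd (\<lambda>y. F y $ i) v"
  using dd_vec by blast

lemma vpol_pd: "vpol m F \<Longrightarrow> vpol (m - 1) (pd p F)"
  unfolding vpol_def using pd_vec_fun[unfolded vpol_def] pol_pd by metis

lemma vpol_dd: "vpol m F \<Longrightarrow> vpol (m - 1) (dd F v)"
  unfolding vpol_def using dd_vec_fun[unfolded vpol_def] pol_dd by metis

lemma inner_fun: "(\<lambda>y. F y \<bullet> u) = (\<lambda>y. \<Sum>i\<in>UNIV. u $ i * F y $ i)"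
  by (auto simp: inner_vec_def mult.commute)

lemma pol_inner: "vpol m F \<Longrightarrow> pol m (\<lambda>y. F y \<bullet> u)"
  unfolding inner_fun vpol_def by (intro pol_sum pol_scale) auto

lemma dd_inner: "vpol m F \<Longrightarrow> dd (\<lambda>y. F y \<bullet> u) v x = dd F v x \<bullet> u"
proof -
  assume F: "vpol m F"
  have "dd (\<lambda>y. F y \<bullet> u) v = (\<lambda>x. \<Sum>i\<in>UNIV. u $ i * dd (\<lambda>y. F y $ i) v x)"
    unfolding inner_fun by (rule dd_lin[of _ m]) (use F in \<open>auto simp: vpol_def\<close>)
  then show ?thesis using dd_vec[OF F] by (simp add: inner_vec_def mult.commute)
qed

lemma pd_const: "pd p (\<lambda>x. c) = (\<lambda>x. 0)"
  unfolding pd_def by (rule dd_const)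

lemma pd_pd_sym: "pol m f \<Longrightarrow> pd i (pd j f) = pd j (pd i f)"
proof (induction rule: pol.induct)
  case (pconst m c) then show ?case by (simp add: pd_const)
next
  case (pcoord m l) then show ?case by (simp add: pd_def dd_coord dd_const)
next
  case (padd m f g)
  have "pd i (pd j (\<lambda>x. f x + g x)) = (\<lambda>x. pd i (pd j f) x + pd i (pd j g) x)"
    unfolding pd_def dd_add[OF padd(1,2)] by (rule dd_add[OF pol_dd[OF padd(1)] pol_dd[OF padd(2)]])
  moreover have "pd j (pd i (\<lambda>x. f x + g x)) = (\<lambda>x. pd j (pd i f) x + pd j (pd i g) x)"
    unfolding pd_def dd_add[OF padd(1,2)] by (rule dd_add[OF pol_dd[OF padd(1)] pol_dd[OF padd(2)]])
  ultimately show ?case using padd.IH by simp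
next
  case (pmult m f n g)
  have f1: "pol (m-1) (pd i f)" "pol (m-1) (pd j f)" using pol_pd pmult by auto
  have g1: "pol (n-1) (pd i g)" "pol (n-1) (pd j g)" using pol_pd pmult by auto
  have "pd i (pd j (\<lambda>x. f x * g x)) = (\<lambda>x. f x * pd i (pd j g) x + pd i f x * pd j g x
         + (pd j f x * pd i g x + pd i (pd j f) x * g x))"
    unfolding pd_def dd_mult[OF pmult(1,2)]
    apply (subst dd_add[OF pol.pmult[OF pmult(1) g1(2)[unfolded pd_def]] pol.pmult[OF f1(2)[unfolded pd_def] pmult(2)]])
    apply (simp add: dd_mult[OF pmult(1) g1(2)[unfolded pd_def]] dd_mult[OF f1(2)[unfolded pd_def] pmult(2)])
    done
  moreover have "pd j (pd i (\<lambda>x. f x * g x)) = (\<lambda>x. f x * pd j (pd i g) x + pd j f x * pd i g x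
         + (pd i f x * pd j g x + pd j (pd i f) x * g x))"
    unfolding pd_def dd_mult[OF pmult(1,2)]
    apply (subst dd_add[OF pol.pmult[OF pmult(1) g1(1)[unfolded pd_def]] pol.pmult[OF f1(1)[unfolded pd_def] pmult(2)]])
    apply (simp add: dd_mult[OF pmult(1) g1(1)[unfolded pd_def]] dd_mult[OF f1(1)[unfolded pd_def] pmult(2)])
    done
  ultimately show ?case using pmult.IH by (simp add: algebra_simps)
qed auto

lemma vpol_curl: "vpol m F \<Longrightarrow> vpol (m - 1) (curl F)"
proof -
  assume F: "vpol m F"
  have p: "pol (m - 1) (pd p (\<lambda>y. F y $ i))" for p i using F unfolding vpol_def by (intro pol_pd) auto
  show ?thesis unfolding vpol_def forall_3 curl_def
    by (simp only: vector_3) (intro conjI pol_sub p)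
qed

lemma curl_comp: "curl F y $ 1 = pd 2 (\<lambda>y. F y $ 3) y - pd 3 (\<lambda>y. F y $ 2) y"
  "curl F y $ 2 = pd 3 (\<lambda>y. F y $ 1) y - pd 1 (\<lambda>y. F y $ 3) y"
  "curl F y $ 3 = pd 1 (\<lambda>y. F y $ 2) y - pd 2 (\<lambda>y. F y $ 1) y"
  by (simp_all add: curl_def)

lemma div_curl:
  assumes F: "vpol m F"
  shows "(\<Sum>i\<in>UNIV. pd i (\<lambda>y. curl F y $ i) x) = 0"
proof -
  have p: "pol (m - 1) (pd p (\<lambda>y. F y $ i))" for p i using F unfolding vpol_def by (intro pol_pd) auto
  have s: "pd p (pd q (\<lambda>y. F y $ i)) = pd q (pd p (\<lambda>y. F y $ i))" for p q i
    using F unfolding vpol_def by (intro pd_pd_sym) auto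
  have sub: "pd r (\<lambda>y. pd p (\<lambda>y. F y $ i) y - pd q (\<lambda>y. F y $ j) y) x
       = pd r (pd p (\<lambda>y. F y $ i)) x - pd r (pd q (\<lambda>y. F y $ j)) x" for r p q i j
  proof -
    have "pd r (\<lambda>y. pd p (\<lambda>y. F y $ i) y + (-1) * pd q (\<lambda>y. F y $ j) y)
       = (\<lambda>y. pd r (pd p (\<lambda>y. F y $ i)) y + pd r (\<lambda>y. (-1) * pd q (\<lambda>y. F y $ j) y) y)"
      unfolding pd_def by (rule dd_add[OF p[unfolded pd_def] pol_scale[OF p[unfolded pd_def]]])
    moreover have "pd r (\<lambda>y. (-1) * pd q (\<lambda>y. F y $ j) y) = (\<lambda>y. - pd r (pd q (\<lambda>y. F y $ j)) y)"
      unfolding pd_def dd_mult[OF pconst p[unfolded pd_def]] by (simp add: dd_const)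
    ultimately show ?thesis by simp
  qed
  have "(\<lambda>y. curl F y $ 1) = (\<lambda>y. pd 2 (\<lambda>y. F y $ 3) y - pd 3 (\<lambda>y. F y $ 2) y)"
    "(\<lambda>y. curl F y $ 2) = (\<lambda>y. pd 3 (\<lambda>y. F y $ 1) y - pd 1 (\<lambda>y. F y $ 3) y)"
    "(\<lambda>y. curl F y $ 3) = (\<lambda>y. pd 1 (\<lambda>y. F y $ 2) y - pd 2 (\<lambda>y. F y $ 1) y)"
    by (simp_all add: curl_comp)
  then show ?thesis unfolding UNIV_3 using s[of 1 2] s[of 1 3] s[of 2 3]
    by (simp add: sub)
qed



locale onb =
  fixes t n1 n2 :: "real^3"
  assumes tt: "t \<bullet> t = 1" and n11: "n1 \<bullet> n1 = 1" and n22: "n2 \<bullet> n2 = 1"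
    and tn1: "t \<bullet> n1 = 0" and tn2: "t \<bullet> n2 = 0" and n12: "n1 \<bullet> n2 = 0"
begin

lemma zero:
  assumes "w \<bullet> t = 0" "w \<bullet> n1 = 0" "w \<bullet> n2 = 0"
  shows "w = 0"
proof -
  define B where "B = {t, n1, n2}"
  have d: "t \<noteq> n1" "t \<noteq> n2" "n1 \<noteq> n2" using tt n11 tn1 tn2 n12 by auto
  have "pairwise orthogonal B" unfolding B_def pairwise_def orthogonal_def
    using tn1 tn2 n12 by (auto simp: inner_commute)
  moreover have "0 \<notin> B" unfolding B_def using tt n11 n22 by auto
  ultimately have ind: "independent B" by (rule pairwise_orthogonal_independent)
  have c: "card B = 3" unfolding B_def using d by simp
  have "dim (UNIV :: (real^3) set) = 3" by simp
  then have "UNIV \<subseteq> span B" using card_ge_dim_independent[OF _ ind, of UNIV] c by simp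
  then have "w \<in> span B" by auto
  have fB: "finite B" unfolding B_def by simp
  then obtain u where u: "w = (\<Sum>v\<in>B. u v *\<^sub>R v)" using \<open>w \<in> span B\<close> span_finite[OF fB] by auto
  have "w \<bullet> w = (\<Sum>v\<in>B. u v * (w \<bullet> v))"
    by (subst (2) u) (simp add: inner_sum_right)
  also have "\<dots> = 0" unfolding B_def using assms d by simp
  finally show ?thesis by simp
qed

lemma expand: "w = (w \<bullet> t) *\<^sub>R t + (w \<bullet> n1) *\<^sub>R n1 + (w \<bullet> n2) *\<^sub>R n2"
proof -
  have "w - ((w \<bullet> t) *\<^sub>R t + (w \<bullet> n1) *\<^sub>R n1 + (w \<bullet> n2) *\<^sub>R n2) = 0"
    by (rule zero) (use tt n11 n22 tn1 tn2 n12 in \<open>simp_all add: inner_diff_left inner_add_left inner_diff_right inner_add_right inner_commute\<close>)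
  then show ?thesis by simp
qed

lemma lin_zero:
  fixes L :: "real^3 \<Rightarrow> 'b::real_vector"
  assumes "linear L" "L t = 0" "L n1 = 0" "L n2 = 0"
  shows "L v = 0"
proof -
  have "L v = L ((v \<bullet> t) *\<^sub>R t + (v \<bullet> n1) *\<^sub>R n1 + (v \<bullet> n2) *\<^sub>R n2)" using expand[of v] by simp
  also have "\<dots> = 0" using assms by (simp add: linear_add linear_cmul)
  finally show ?thesis .
qed

lemma trace:
  fixes A :: "real^3 \<Rightarrow> real^3"
  assumes A: "linear A"
  shows "(\<Sum>i\<in>UNIV. A (axis i 1) $ i) = A t \<bullet> t + A n1 \<bullet> n1 + A n2 \<bullet> n2"
proof -
  have "A (axis i 1) = t $ i *\<^sub>R A t + n1 $ i *\<^sub>R A n1 + n2 $ i *\<^sub>R A n2" for i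
  proof -
    have "A (axis i 1) = A ((axis i 1 \<bullet> t) *\<^sub>R t + (axis i 1 \<bullet> n1) *\<^sub>R n1 + (axis i 1 \<bullet> n2) *\<^sub>R n2)"
      using expand[of "axis i 1"] by simp
    also have "\<dots> = t $ i *\<^sub>R A t + n1 $ i *\<^sub>R A n1 + n2 $ i *\<^sub>R A n2"
      using A by (simp add: linear_add linear_cmul inner_commute[of "axis i 1"] inner_axis)
    finally show ?thesis .
  qed
  then have "(\<Sum>i\<in>UNIV. A (axis i 1) $ i) = (\<Sum>i\<in>UNIV. t $ i * A t $ i + n1 $ i * A n1 $ i + n2 $ i * A n2 $ i)"
    by simp
  also have "\<dots> = A t \<bullet> t + A n1 \<bullet> n1 + A n2 \<bullet> n2"
    by (simp add: sum.distrib inner_vec_def mult.commute)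
  finally show ?thesis .
qed

end



lemma restr_poly: "pol m g \<Longrightarrow> \<exists>P. degree P \<le> m \<and> (\<lambda>s. g (edge_pt a b s)) = poly P"
  using pol_line[of m g a "b - a"] by (auto simp: edge_pt_def fun_eq_iff)

lemma cont_poly: "continuous_on S (poly (P :: real poly))"
  by (intro continuous_at_imp_continuous_on ballI poly_isCont)

lemma ip_self_zero:
  assumes ab: "a \<noteq> b" and g: "pol m g"
    and ip: "edge_ip a b (\<lambda>s. g (edge_pt a b s)) (\<lambda>s. g (edge_pt a b s)) = 0"
  shows "g (edge_pt a b s) = 0"
proof -
  obtain P where P: "(\<lambda>s. g (edge_pt a b s)) = poly P" using restr_poly[OF g] by blast
  have "norm (b - a) \<noteq> 0" using ab by simp
  then have "integral {0..1} (\<lambda>s. poly P s * poly P s) = 0" using ip unfolding edge_ip_def P by simp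
  then have "\<forall>s\<in>{0..1}. poly P s = 0" by (intro int_sq_zero cont_poly)
  then have "P = 0" by (rule poly_zero_on01)
  then show ?thesis using fun_cong[OF P, of s] by simp
qed

lemma bubble_mem:
  assumes g: "pol m g" and za: "Za r g a" and zb: "Za r g b" and d: "m - 2*r \<le> d"
  shows "(\<lambda>s. g (edge_pt a b s)) \<in> bubble_space r d"
proof -
  obtain Q where Q: "degree Q \<le> m - 2*r" "\<forall>s. g (a + s *\<^sub>R (b - a)) = ((1 - s) * s) ^ r * poly Q s"
    using edge_bubble[OF g za zb] by blast
  have "(\<lambda>s. g (edge_pt a b s)) = (\<lambda>s. ((1 - s) * s) ^ r * poly Q s)"
    using Q(2) by (auto simp: edge_pt_def)
  then show ?thesis unfolding bubble_space_def using Q(1) d by auto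
qed

lemma sdof_zero:
  assumes ab: "a \<noteq> b" and g: "pol m g" and za: "Za r g a" and zb: "Za r g b" and d: "m - 2*r \<le> d"
    and dof: "\<forall>w\<in>bubble_space r d. edge_ip a b (\<lambda>s. g (edge_pt a b s)) w = 0"
  shows "g (edge_pt a b s) = 0"
  using ip_self_zero[OF ab g] dof bubble_mem[OF g za zb d] by blast

lemma sdof_zero_mean:
  assumes ab: "a \<noteq> b" and g: "pol m g" and za: "Za r g a" and zb: "Za r g b" and d: "m - 2*r \<le> d"
    and mom: "edge_ip a b (\<lambda>s. g (edge_pt a b s)) (\<lambda>s. 1) = 0"
    and dof: "\<forall>w\<in>zero_mean (bubble_space r d). edge_ip a b (\<lambda>s. g (edge_pt a b s)) w = 0"
  shows "g (edge_pt a b s) = 0"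
proof -
  have "norm (b - a) \<noteq> 0" using ab by simp
  then have "integral {0..1} (\<lambda>s. g (edge_pt a b s)) = 0" using mom unfolding edge_ip_def by simp
  then have "(\<lambda>s. g (edge_pt a b s)) \<in> zero_mean (bubble_space r d)"
    unfolding zero_mean_def using bubble_mem[OF g za zb d] by simp
  then show ?thesis using ip_self_zero[OF ab g] dof by blast
qed

lemma dd_utangent: "pol m g \<Longrightarrow> dd g (utangent a b) x = dd g (b - a) x / norm (b - a)"
  unfolding utangent_def by (simp add: dd_scale)

lemma tdof_zero:
  assumes ab: "a \<noteq> b" and g: "pol m g" and za: "g a = 0" and W: "(\<lambda>s. g (edge_pt a b s)) \<in> W"
    and dof: "\<forall>w\<in>W. edge_ip a b (\<lambda>s. dd g (utangent a b) (edge_pt a b s)) (tderiv a b w) = 0"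
  shows "g (edge_pt a b s) = 0"
proof -
  obtain P where P: "(\<lambda>s. g (edge_pt a b s)) = poly P" using restr_poly[OF g] by blast
  have P': "\<forall>s. g (a + s *\<^sub>R (b - a)) = poly P s" using P by (auto simp: edge_pt_def fun_eq_iff)
  have L: "norm (b - a) \<noteq> 0" using ab by simp
  have e1: "dd g (utangent a b) (edge_pt a b s) = poly (pderiv P) s / norm (b - a)" for s
    unfolding dd_utangent[OF g] edge_pt_def using restr_deriv[OF g P'] by simp
  have e2: "tderiv a b (poly P) s = poly (pderiv P) s / norm (b - a)" for s
    unfolding tderiv_def using DERIV_imp_deriv[OF poly_DERIV[of P s]] by simp
  have "edge_ip a b (\<lambda>s. poly (pderiv P) s / norm (b - a)) (\<lambda>s. poly (pderiv P) s / norm (b - a)) = 0"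
  proof -
    have e2f: "tderiv a b (poly P) = (\<lambda>s. poly (pderiv P) s / norm (b - a))" by (rule ext) (rule e2)
    have "edge_ip a b (\<lambda>s. dd g (utangent a b) (edge_pt a b s)) (tderiv a b (poly P)) = 0"
      using dof W unfolding P by blast
    then show ?thesis unfolding e1 e2f .
  qed
  then have "integral {0..1} (\<lambda>s. (poly (pderiv P) s / norm (b - a)) * (poly (pderiv P) s / norm (b - a))) = 0"
    unfolding edge_ip_def using L by simp
  then have "\<forall>s\<in>{0..1}. poly (pderiv P) s / norm (b - a) = 0"
    by (intro int_sq_zero continuous_on_divide cont_poly continuous_on_const) (use L in auto)
  then have "\<forall>s\<in>{0..1}. poly (pderiv P) s = 0" using L by simp
  then have "pderiv P = 0" by (rule poly_zero_on01)
  then have "degree P = 0" by (simp add: pderiv_eq_0_iff)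
  then obtain c where c: "P = [:c:]" by (metis degree_eq_zeroE)
  have "poly P 0 = 0" using fun_cong[OF P, of 0] za by (simp add: edge_pt_def)
  then have "P = 0" using c by simp
  then show ?thesis using fun_cong[OF P, of s] by simp
qed



lemma comb2_fun: "(\<lambda>y. \<Sum>i\<in>UNIV. (if i then \<alpha> else \<beta>) * (if i then f else g) y) = (\<lambda>y. \<alpha> * f y + \<beta> * (g y :: real))"
  by (simp add: UNIV_bool add.commute)

lemma Za_comb2: "pol m f \<Longrightarrow> pol m g \<Longrightarrow> Za r f x \<Longrightarrow> Za r g x \<Longrightarrow> Za r (\<lambda>y. \<alpha> * f y + \<beta> * g y) x"
  using Za_lin[of "UNIV::bool set" m "\<lambda>i. if i then f else g" r x "\<lambda>i. if i then \<alpha> else \<beta>"]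
  unfolding comb2_fun by (simp split: if_splits)

lemma dd_comb2: "pol m f \<Longrightarrow> pol m g \<Longrightarrow> dd (\<lambda>y. \<alpha> * f y + \<beta> * g y) v x = \<alpha> * dd f v x + \<beta> * dd g v x"
  using dd_lin[of "UNIV::bool set" m "\<lambda>i. if i then f else g" "\<lambda>i. if i then \<alpha> else \<beta>" v]
  unfolding comb2_fun by (simp split: if_splits add: UNIV_bool)

lemma pol_comb2: "pol m f \<Longrightarrow> pol m g \<Longrightarrow> pol m (\<lambda>y. \<alpha> * f y + \<beta> * g y)"
  by (intro padd pol_scale)

lemma Za_inner: "vpol m F \<Longrightarrow> (\<And>l. Za r (\<lambda>y. F y $ l) x) \<Longrightarrow> Za r (\<lambda>y. F y \<bullet> u) x"
  unfolding inner_fun by (rule Za_lin[of _ m]) (auto simp: vpol_def)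

lemma line_zero_dd:
  assumes g: "pol m g" and z: "\<forall>s. g (edge_pt a b s) = 0"
  shows "dd g (b - a) (edge_pt a b s) = 0"
proof -
  obtain P where P: "(\<lambda>s. g (edge_pt a b s)) = poly P" using restr_poly[OF g] by blast
  have P': "\<forall>s. g (a + s *\<^sub>R (b - a)) = poly P s" using P by (auto simp: edge_pt_def fun_eq_iff)
  have "\<forall>s\<in>{0..1}. poly P s = 0" using z P by (metis)
  then have "P = 0" by (rule poly_zero_on01)
  then show ?thesis using restr_deriv[OF g P', of s] by (simp add: edge_pt_def)
qed

lemma line_zero_ddt:
  assumes g: "pol m g" and z: "\<forall>s. g (edge_pt a b s) = 0"
  shows "dd g (utangent a b) (edge_pt a b s) = 0"
  using line_zero_dd[OF g z] dd_utangent[OF g] by simp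

lemma vdof_zero:
  assumes ab: "a \<noteq> b" and g: "\<And>i. pol m (g i)" and za: "\<And>i. Za r (g i) a" and zb: "\<And>i. Za r (g i) b"
    and d: "m - 2*r \<le> d"
    and U: "\<And>s. U s = (\<chi> i. g i (edge_pt a b s))"
    and dof: "\<forall>w. (\<forall>i. (\<lambda>s. w s $ i) \<in> bubble_space r d) \<longrightarrow> edge_ipv a b U w = 0"
  shows "g i (edge_pt a b s) = 0"
proof -
  have "\<forall>i. \<exists>P. (\<lambda>s. g i (edge_pt a b s)) = poly P" using restr_poly[OF g] by blast
  then obtain P where P: "\<And>i. (\<lambda>s. g i (edge_pt a b s)) = poly (P i)" by metis
  have "(\<lambda>s. U s $ i) \<in> bubble_space r d" for i
    unfolding U using bubble_mem[OF g za zb d] by simp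
  then have "edge_ipv a b U U = 0" using dof by blast
  moreover have "norm (b - a) \<noteq> 0" using ab by simp
  ultimately have I: "integral {0..1} (\<lambda>s. U s \<bullet> U s) = 0" unfolding edge_ipv_def by simp
  have UU: "U s \<bullet> U s = (\<Sum>i\<in>UNIV. poly (P i) s * poly (P i) s)" for s
    unfolding U inner_vec_def using P by (simp add: fun_eq_iff)
  have "continuous_on {0..1} (\<lambda>s. \<Sum>i\<in>UNIV. poly (P i) s * poly (P i) s)"
    by (intro continuous_on_sum continuous_on_mult cont_poly)
  then have "\<forall>s\<in>{0..1}. (\<Sum>i\<in>UNIV. poly (P i) s * poly (P i) s) = 0"
    using integral_eq_0_iff[of 0 1 "\<lambda>s. \<Sum>i\<in>UNIV. poly (P i) s * poly (P i) s"] I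
    unfolding UU by (simp add: sum_nonneg)
  then have "\<forall>s\<in>{0..1}. poly (P i) s = 0"
    by (simp add: sum_nonneg_eq_0_iff)
  then have "P i = 0" by (rule poly_zero_on01)
  then show ?thesis using fun_cong[OF P[of i], of s] by simp
qed

lemma vpol_linear: "vpol m F \<Longrightarrow> linear (\<lambda>v. dd F v x)"
proof -
  assume F: "vpol m F"
  have "linear (\<lambda>v. \<chi> i. dd (\<lambda>y. F y $ i) v x)"
    using has_derivative_linear[OF vpol_has_derivative[OF F]] .
  moreover have "(\<lambda>v. \<chi> i. dd (\<lambda>y. F y $ i) v x) = (\<lambda>v. dd F v x)"
    using dd_vec[OF F] by (simp add: vec_eq_iff fun_eq_iff)
  ultimately show ?thesis by simp
qed

lemma Za_curl:
  assumes F: "vpol m F" and z: "\<And>l. Za (Suc r) (\<lambda>y. F y $ l) x"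
  shows "Za r (\<lambda>y. curl F y $ i) x"
proof -
  have p: "pol (m - 1) (pd p (\<lambda>y. F y $ l))" for p l using F unfolding vpol_def by (intro pol_pd) auto
  have zp: "Za r (pd p (\<lambda>y. F y $ l)) x" for p l by (rule Za_pd[OF z])
  have "Za r (\<lambda>y. 1 * pd p (\<lambda>y. F y $ l) y + (-1) * pd q (\<lambda>y. F y $ l') y) x" for p q l l'
    by (rule Za_comb2[OF p p zp zp])
  then have "Za r (\<lambda>y. pd p (\<lambda>y. F y $ l) y - pd q (\<lambda>y. F y $ l') y) x" for p q l l'
    by simp
  then show ?thesis using exhaust_3[of i] by (auto simp: curl_comp)
qed



lemma len_lt4: "length (ps::'a list) < 4 \<Longrightarrow> ps = [] \<or> (\<exists>p. ps = [p]) \<or> (\<exists>p q. ps = [p,q]) \<or> (\<exists>p q r. ps = [p,q,r])"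
  by (auto simp: length_Suc_conv numeral_eq_Suc less_Suc_eq)

lemma Za4_vert:
  assumes F: "vpol m F"
    and v: "\<And>p q r. F x = 0 \<and> pd p F x = 0 \<and> pd p (pd q F) x = 0 \<and> pd p (pd q (pd r F)) x = 0"
  shows "Za 4 (\<lambda>y. F y $ l) x"
  unfolding Za_def
proof (intro allI impI)
  fix ps :: "3 list" assume "length ps < 4"
  have F1: "vpol (m-1) (pd p F)" for p by (rule vpol_pd[OF F])
  have F2: "vpol (m-1-1) (pd q (pd p F))" for p q by (rule vpol_pd[OF F1])
  have e1: "pd p (\<lambda>y. F y $ l) = (\<lambda>y. pd p F y $ l)" for p using pd_vec_fun[OF F] by simp
  have e2: "pd q (\<lambda>y. pd p F y $ l) = (\<lambda>y. pd q (pd p F) y $ l)" for p q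
    using pd_vec_fun[OF F1] by simp
  have e3: "pd r (\<lambda>y. pd q (pd p F) y $ l) = (\<lambda>y. pd r (pd q (pd p F)) y $ l)" for p q r
    using pd_vec_fun[OF F2] by simp
  from len_lt4[OF \<open>length ps < 4\<close>] show "pdl ps (\<lambda>y. F y $ l) x = 0"
    using v by (auto simp: e1 e2 e3)
qed

lemma edge_main:
  fixes \<xi> :: "real^3 \<Rightarrow> real^3"
  assumes ab: "a \<noteq> b" and ON: "onb (utangent a b) n1 n2" and xi: "vpol (k - 1) \<xi>"
    and za: "\<And>l. Za 4 (\<lambda>y. \<xi> y $ l) a" and zb: "\<And>l. Za 4 (\<lambda>y. \<xi> y $ l) b"
    and dofs: "edge_dofs_vanish k a b n1 n2 \<xi>"
  shows "\<xi> (edge_pt a b s) = 0 \<and> (\<forall>p. pd p \<xi> (edge_pt a b s) = 0) \<and> (\<forall>p. pd p (curl \<xi>) (edge_pt a b s) = 0)"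
proof -
  interpret onb "utangent a b" n1 n2 by (rule ON)
  define t where "t = utangent a b"
  define p where "p = edge_pt a b"
  define gu where "gu u = (\<lambda>y. \<xi> y \<bullet> u)" for u
  have D: "edge_ip a b (\<lambda>s. \<xi> (p s) \<bullet> t) (\<lambda>s. 1) = 0"
     "\<forall>w \<in> zero_mean (bubble_space 4 (k - 9)). edge_ip a b (\<lambda>s. \<xi> (p s) \<bullet> t) w = 0"
     "\<forall>w \<in> bubble_space 4 (k - 9). edge_ip a b (\<lambda>s. dd (\<lambda>x. \<xi> x \<bullet> n1) t (p s)) (tderiv a b w) = 0"
     "\<forall>w \<in> bubble_space 4 (k - 9). edge_ip a b (\<lambda>s. dd (\<lambda>x. \<xi> x \<bullet> n2) t (p s)) (tderiv a b w) = 0"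
     "\<forall>u \<in> {t, n1, n2}. \<forall>n \<in> {n1, n2}. \<forall>w \<in> bubble_space 3 (k - 8). edge_ip a b (\<lambda>s. dd (\<lambda>x. \<xi> x \<bullet> u) n (p s)) w = 0"
     "\<forall>w. (\<forall>i. (\<lambda>s. w s $ i) \<in> bubble_space 2 (k - 7)) \<longrightarrow>
          edge_ipv a b (\<lambda>s. dd (curl \<xi>) n1 (p s)) w = 0"
     "\<forall>w. (\<forall>i. (\<lambda>s. w s $ i) \<in> bubble_space 2 (k - 7)) \<longrightarrow>
          edge_ipv a b (\<lambda>s. let v = dd (curl \<xi>) n2 (p s) in v - (v \<bullet> n2) *\<^sub>R n2) w = 0"
    using dofs unfolding edge_dofs_vanish_def Let_def t_def p_def by auto
  have gpol: "pol (k - 1) (gu u)" for u unfolding gu_def by (rule pol_inner[OF xi])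
  have gza: "Za 4 (gu u) a" for u unfolding gu_def by (rule Za_inner[OF xi za])
  have gzb: "Za 4 (gu u) b" for u unfolding gu_def by (rule Za_inner[OF xi zb])
  have gdpol: "pol (k - 1 - 1) (dd (gu u) v)" for u v by (rule pol_dd[OF gpol])
  have gdza: "Za 3 (dd (gu u) v) a" for u v by (rule Za_dd[OF gpol]) (use gza in \<open>simp add: numeral_eq_Suc\<close>)
  have gdzb: "Za 3 (dd (gu u) v) b" for u v by (rule Za_dd[OF gpol]) (use gzb in \<open>simp add: numeral_eq_Suc\<close>)
  have A: "gu t (p s) = 0" for s unfolding p_def
    by (rule sdof_zero_mean[OF ab gpol gza gzb]) (use D(1,2) in \<open>auto simp: gu_def p_def\<close>)
  have B1: "gu n1 (p s) = 0" for s unfolding p_def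
  proof (rule tdof_zero[OF ab gpol])
    show "gu n1 a = 0" using Za_zero[of 3] gza by (simp add: numeral_eq_Suc)
    show "(\<lambda>s. gu n1 (edge_pt a b s)) \<in> bubble_space 4 (k - 9)"
      by (rule bubble_mem[OF gpol gza gzb]) simp
    show "\<forall>w\<in>bubble_space 4 (k - 9). edge_ip a b (\<lambda>s. dd (gu n1) (utangent a b) (edge_pt a b s)) (tderiv a b w) = 0"
      using D(3) by (simp add: gu_def t_def p_def)
  qed
  have B2: "gu n2 (p s) = 0" for s unfolding p_def
  proof (rule tdof_zero[OF ab gpol])
    show "gu n2 a = 0" using Za_zero[of 3] gza by (simp add: numeral_eq_Suc)
    show "(\<lambda>s. gu n2 (edge_pt a b s)) \<in> bubble_space 4 (k - 9)"
      by (rule bubble_mem[OF gpol gza gzb]) simp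
    show "\<forall>w\<in>bubble_space 4 (k - 9). edge_ip a b (\<lambda>s. dd (gu n2) (utangent a b) (edge_pt a b s)) (tderiv a b w) = 0"
      using D(4) by (simp add: gu_def t_def p_def)
  qed
  have xi0: "\<xi> (p s) = 0" for s
    using zero[of "\<xi> (p s)"] A B1 B2 by (simp add: gu_def t_def)
  have CD: "dd (gu u) n (p s) = 0" if "u \<in> {t, n1, n2}" "n \<in> {n1, n2}" for u n s unfolding p_def
    by (rule sdof_zero[OF ab gdpol gdza gdzb]) (use D(5) that in \<open>auto simp: gu_def p_def\<close>)
  have T: "dd (gu u) t (p s) = 0" for u s unfolding t_def p_def
    by (rule line_zero_ddt[OF gpol]) (use xi0 in \<open>simp add: gu_def p_def\<close>)
  have dxi: "dd \<xi> v (p s) = 0" if "v \<in> {t, n1, n2}" for v s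
  proof (rule zero)
    show "dd \<xi> v (p s) \<bullet> utangent a b = 0" "dd \<xi> v (p s) \<bullet> n1 = 0" "dd \<xi> v (p s) \<bullet> n2 = 0"
      using that CD T dd_inner[OF xi, symmetric] unfolding gu_def t_def by auto
  qed
  have dxi_all: "dd \<xi> v (p s) = 0" for v s
    by (rule lin_zero[OF vpol_linear[OF xi]]) (use dxi t_def in auto)
  have pxi: "pd q \<xi> (p s) = 0" for q s unfolding pd_def by (rule dxi_all)
  define C where "C = curl \<xi>"
  have Cpol: "vpol (k - 1 - 1) C" unfolding C_def by (rule vpol_curl[OF xi])
  have Cipol: "pol (k - 1 - 1) (\<lambda>y. C y $ i)" for i using Cpol unfolding vpol_def by auto
  have Cza: "Za 3 (\<lambda>y. C y $ i) a" for i unfolding C_def by (rule Za_curl[OF xi]) (use za in \<open>simp add: numeral_eq_Suc\<close>)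
  have Czb: "Za 3 (\<lambda>y. C y $ i) b" for i unfolding C_def by (rule Za_curl[OF xi]) (use zb in \<open>simp add: numeral_eq_Suc\<close>)
  have C0: "C (p s) = 0" for s
  proof -
    have "pd q (\<lambda>y. \<xi> y $ l) (p s) = 0" for q l using pd_vec[OF xi, of q "p s" l] pxi by simp
    then show ?thesis unfolding C_def by (simp add: vec_eq_iff forall_3 curl_comp)
  qed
  have E: "dd C n1 (p s) = 0" for s
  proof -
    have "dd (\<lambda>y. C y $ i) n1 (edge_pt a b s) = 0" for i
    proof (rule vdof_zero[OF ab, where U = "\<lambda>s. dd (curl \<xi>) n1 (p s)"])
      show "pol (k - 1 - 1 - 1) (dd (\<lambda>y. C y $ i) n1)" for i by (rule pol_dd[OF Cipol])
      show "Za 2 (dd (\<lambda>y. C y $ i) n1) a" for i by (rule Za_dd[OF Cipol]) (use Cza in \<open>simp add: numeral_eq_Suc\<close>)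
      show "Za 2 (dd (\<lambda>y. C y $ i) n1) b" for i by (rule Za_dd[OF Cipol]) (use Czb in \<open>simp add: numeral_eq_Suc\<close>)
      show "k - 1 - 1 - 1 - 2 * 2 \<le> k - 7" by simp
      show "dd (curl \<xi>) n1 (p s) = (\<chi> i. dd (\<lambda>y. C y $ i) n1 (edge_pt a b s))" for s
        using dd_vec[OF Cpol] unfolding C_def p_def by (simp add: vec_eq_iff)
      show "\<forall>w. (\<forall>i. (\<lambda>s. w s $ i) \<in> bubble_space 2 (k - 7)) \<longrightarrow> edge_ipv a b (\<lambda>s. dd (curl \<xi>) n1 (p s)) w = 0"
        by (rule D(6))
    qed
    then show ?thesis using dd_vec[OF Cpol] unfolding p_def by (simp add: vec_eq_iff)
  qed
  define cn where "cn = (\<lambda>y. C y \<bullet> n2)"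
  have cnpol: "pol (k - 1 - 1) cn" unfolding cn_def by (rule pol_inner[OF Cpol])
  have cnza: "Za 3 cn a" unfolding cn_def by (rule Za_inner[OF Cpol Cza])
  have cnzb: "Za 3 cn b" unfolding cn_def by (rule Za_inner[OF Cpol Czb])
  define f where "f i = (\<lambda>y. 1 * C y $ i + (- (n2 $ i)) * cn y)" for i
  have fpol: "pol (k - 1 - 1) (f i)" for i unfolding f_def by (rule pol_comb2[OF Cipol cnpol])
  have fza: "Za 3 (f i) a" for i unfolding f_def by (rule Za_comb2[OF Cipol cnpol Cza cnza])
  have fzb: "Za 3 (f i) b" for i unfolding f_def by (rule Za_comb2[OF Cipol cnpol Czb cnzb])
  have ddf: "dd (f i) v x = dd C v x $ i - n2 $ i * (dd C v x \<bullet> n2)" for i v x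
    unfolding f_def by (subst dd_comb2[OF Cipol cnpol]) (simp add: cn_def dd_inner[OF Cpol] dd_vec[OF Cpol])
  have F: "dd C n2 (p s) - (dd C n2 (p s) \<bullet> n2) *\<^sub>R n2 = 0" for s
  proof -
    have "dd (f i) n2 (edge_pt a b s) = 0" for i
    proof (rule vdof_zero[OF ab, where U = "\<lambda>s. let v = dd (curl \<xi>) n2 (p s) in v - (v \<bullet> n2) *\<^sub>R n2"])
      show "pol (k - 1 - 1 - 1) (dd (f i) n2)" for i by (rule pol_dd[OF fpol])
      show "Za 2 (dd (f i) n2) a" for i by (rule Za_dd[OF fpol]) (use fza in \<open>simp add: numeral_eq_Suc\<close>)
      show "Za 2 (dd (f i) n2) b" for i by (rule Za_dd[OF fpol]) (use fzb in \<open>simp add: numeral_eq_Suc\<close>)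
      show "k - 1 - 1 - 1 - 2 * 2 \<le> k - 7" by simp
      show "(let v = dd (curl \<xi>) n2 (p s) in v - (v \<bullet> n2) *\<^sub>R n2) = (\<chi> i. dd (f i) n2 (edge_pt a b s))" for s
        unfolding ddf C_def p_def Let_def by (simp add: vec_eq_iff mult.commute)
      show "\<forall>w. (\<forall>i. (\<lambda>s. w s $ i) \<in> bubble_space 2 (k - 7)) \<longrightarrow>
          edge_ipv a b (\<lambda>s. let v = dd (curl \<xi>) n2 (p s) in v - (v \<bullet> n2) *\<^sub>R n2) w = 0"
        by (rule D(7))
    qed
    then show ?thesis unfolding ddf p_def by (simp add: vec_eq_iff mult.commute)
  qed
  have TC: "dd C t (p s) = 0" for s
  proof -
    have "dd (\<lambda>y. C y $ i) t (p s) = 0" for i unfolding t_def p_def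
      by (rule line_zero_ddt[OF Cipol]) (use C0 in \<open>simp add: p_def\<close>)
    then show ?thesis using dd_vec[OF Cpol] by (simp add: vec_eq_iff)
  qed
  have N2: "dd C n2 (p s) = 0" for s
  proof -
    have lin: "linear (\<lambda>v. dd C v (p s))" by (rule vpol_linear[OF Cpol])
    have "(\<Sum>i\<in>UNIV. dd C (axis i 1) (p s) $ i) = 0"
      using div_curl[OF xi, of "p s"] dd_vec[OF Cpol] unfolding C_def pd_def by simp
    then have "dd C t (p s) \<bullet> t + dd C n1 (p s) \<bullet> n1 + dd C n2 (p s) \<bullet> n2 = 0"
      using trace[OF lin] unfolding t_def by simp
    then have "dd C n2 (p s) \<bullet> n2 = 0" using TC E by simp
    then show ?thesis using F[of s] by simp
  qed
  have dC_all: "dd C v (p s) = 0" for v s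
    by (rule lin_zero[OF vpol_linear[OF Cpol]]) (use TC E N2 t_def in auto)
  show ?thesis using xi0 pxi dC_all unfolding p_def C_def pd_def by simp
qed


theorem lemmaB1:
  fixes k :: nat and V :: "nat \<Rightarrow> real^3" and \<xi> :: "real^3 \<Rightarrow> real^3"
    and N1 N2 :: "nat \<Rightarrow> nat \<Rightarrow> real^3"
  assumes k: "k \<ge> 9"
    and tet: "inj_on V {0..3}" "\<not> affine_dependent (V ` {0..3})"
    and normals: "\<And>i j. i < j \<Longrightarrow> j \<le> 3 \<Longrightarrow>
        norm (N1 i j) = 1 \<and> norm (N2 i j) = 1 \<and> N1 i j \<bullet> N2 i j = 0
        \<and> N1 i j \<bullet> (V j - V i) = 0 \<and> N2 i j \<bullet> (V j - V i) = 0"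
    and poly: "vpoly3 (k - 1) \<xi>"
    and vert: "\<And>m p q r. m \<le> 3 \<Longrightarrow>
        \<xi> (V m) = 0 \<and> pd p \<xi> (V m) = 0 \<and> pd p (pd q \<xi>) (V m) = 0
        \<and> pd p (pd q (pd r \<xi>)) (V m) = 0"
    and edges: "\<And>i j. i < j \<Longrightarrow> j \<le> 3 \<Longrightarrow>
        edge_dofs_vanish k (V i) (V j) (N1 i j) (N2 i j) \<xi>"
  shows "\<forall>i j. i < j \<and> j \<le> 3 \<longrightarrow> (\<forall>x \<in> closed_segment (V i) (V j).
           \<xi> x = 0 \<and> (\<forall>p. pd p \<xi> x = 0) \<and> (\<forall>p. pd p (curl \<xi>) x = 0))"
  proof (intro allI impI ballI)
  fix i j :: nat and x
  assume ij: "i < j \<and> j \<le> 3" and x: "x \<in> closed_segment (V i) (V j)"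
  define a b where "a = V i" and "b = V j"
  have ab: "a \<noteq> b" unfolding a_def b_def using inj_on_contraD[OF tet(1), of i j] ij by simp
  have xi: "vpol (k - 1) \<xi>" by (rule vpoly3_vpol[OF poly])
  have za: "Za 4 (\<lambda>y. \<xi> y $ l) a" for l unfolding a_def by (rule Za4_vert[OF xi]) (use vert ij in auto)
  have zb: "Za 4 (\<lambda>y. \<xi> y $ l) b" for l unfolding b_def by (rule Za4_vert[OF xi]) (use vert ij in auto)
  have nr: "norm (N1 i j) = 1" "norm (N2 i j) = 1" "N1 i j \<bullet> N2 i j = 0"
     "N1 i j \<bullet> (b - a) = 0" "N2 i j \<bullet> (b - a) = 0"
    using normals[of i j] ij unfolding a_def b_def by auto
  have L: "norm (b - a) \<noteq> 0" using ab by simp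
  have nt: "norm (utangent a b) = 1" unfolding utangent_def using L by simp
  have ON: "onb (utangent a b) (N1 i j) (N2 i j)"
  proof
    show "utangent a b \<bullet> utangent a b = 1" using nt by (simp add: dot_square_norm)
    show "N1 i j \<bullet> N1 i j = 1" "N2 i j \<bullet> N2 i j = 1" using nr by (simp_all add: dot_square_norm)
    show "N1 i j \<bullet> N2 i j = 0" by (rule nr(3))
    show "utangent a b \<bullet> N1 i j = 0" "utangent a b \<bullet> N2 i j = 0"
      unfolding utangent_def using nr(4,5) by (simp_all add: inner_commute)
  qed
  have dofs: "edge_dofs_vanish k a b (N1 i j) (N2 i j) \<xi>" unfolding a_def b_def using edges ij by auto
  obtain u where u: "x = (1 - u) *\<^sub>R a + u *\<^sub>R b" using x unfolding a_def b_def in_segment(1) by auto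
  have "x = edge_pt a b u" unfolding u edge_pt_def by (simp add: algebra_simps)
  then show "\<xi> x = 0 \<and> (\<forall>p. pd p \<xi> x = 0) \<and> (\<forall>p. pd p (curl \<xi>) x = 0)"
    using edge_main[OF ab ON xi za zb dofs] by simp
qed

end
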